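(* $\alpha(n)\ge (1+o(1))\dfrac{54}{n^3}$ as $n\to\infty$, where \[ \alpha(n)=\min\{\lambda_1(G): G\text{ simple connected on } n\text{ vertices}\}. \]
   Context: $\lambda_1(G)$ denotes the second smallest eigenvalue of the normalized Laplacian $\mathcal{L}=I-T^{-1/2}AT^{-1/2}$, where $A$ is the adjacency matrix and $T$ the diagonal degree matrix. *)

theory Defs
  imports Complex_Main "Jordan_Normal_Form.Char_Poly"
begin

definition simple_graph :: "nat \<Rightarrow> (nat \<Rightarrow> nat \<Rightarrow> bool) \<Rightarrow> bool" where
  "simple_graph n E \<longleftrightarrow>
     (\<forall>i j. E i j \<longrightarrow> i < n \<and> j < n) \<and> (\<forall>i j. E i j \<longleftrightarrow> E j i) \<and> (\<forall>i. \<not> E i i)"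

definition connected_graph :: "nat \<Rightarrow> (nat \<Rightarrow> nat \<Rightarrow> bool) \<Rightarrow> bool" where
  "connected_graph n E \<longleftrightarrow> (\<forall>i<n. \<forall>j<n. E\<^sup>*\<^sup>* i j)"

definition adj_matrix :: "nat \<Rightarrow> (nat \<Rightarrow> nat \<Rightarrow> bool) \<Rightarrow> real mat" where
  "adj_matrix n E = mat n n (\<lambda>(i,j). if E i j then 1 else 0)"

definition degree :: "nat \<Rightarrow> (nat \<Rightarrow> nat \<Rightarrow> bool) \<Rightarrow> nat \<Rightarrow> real" where
  "degree n E i = (\<Sum>j<n. if E i j then 1 else 0)"

definition deg_inv_sqrt :: "nat \<Rightarrow> (nat \<Rightarrow> nat \<Rightarrow> bool) \<Rightarrow> real mat" where
  "deg_inv_sqrt n E = mat n n (\<lambda>(i,j). if i = j then 1 / sqrt (degree n E i) else 0)"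

definition norm_laplacian :: "nat \<Rightarrow> (nat \<Rightarrow> nat \<Rightarrow> bool) \<Rightarrow> real mat" where
  "norm_laplacian n E = 1\<^sub>m n - deg_inv_sqrt n E * adj_matrix n E * deg_inv_sqrt n E"

text \<open>Eigenvalues (with multiplicity) in increasing order: lambda_0 \<le> lambda_1 \<le> ...;
  lambda_1 is the second smallest.\<close>
definition lambda1 :: "nat \<Rightarrow> (nat \<Rightarrow> nat \<Rightarrow> bool) \<Rightarrow> real" where
  "lambda1 n E = sorted_list_of_multiset (proots (char_poly (norm_laplacian n E))) ! 1"

definition alpha :: "nat \<Rightarrow> real" where
  "alpha n = Inf {lambda1 n E | E. simple_graph n E \<and> connected_graph n E}"

end

theory Submission
  imports Defs "Jordan_Normal_Form.Schur_Decomposition" "HOL-Real_Asymp.Real_Asymp"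
begin


lemma mult_mat_vec_sum:
  assumes "A \<in> carrier_mat n n" "v \<in> carrier_vec n" "i < n"
  shows "(A *\<^sub>v v) $ i = (\<Sum>j<n. A $$ (i,j) * v $ j)"
  using assms by (auto simp: scalar_prod_def atLeast0LessThan intro!: sum.cong)

lemma sym_real_root_real:
  fixes N :: "real mat"
  assumes N: "N \<in> carrier_mat n n" and sym: "\<And>i j. i < n \<Longrightarrow> j < n \<Longrightarrow> N $$ (i,j) = N $$ (j,i)"
    and root: "poly (char_poly (map_mat complex_of_real N)) z = 0"
  shows "z \<in> \<real>"
proof -
  let ?Nc = "map_mat complex_of_real N"
  have Nc: "?Nc \<in> carrier_mat n n" using N by auto
  from root eigenvalue_root_char_poly[OF Nc] have "eigenvalue ?Nc z" by simp
  then obtain v where ev: "eigenvector ?Nc v z" unfolding eigenvalue_def by auto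
  hence v: "v \<in> carrier_vec n" and v0: "v \<noteq> 0\<^sub>v n" and eq: "?Nc *\<^sub>v v = z \<cdot>\<^sub>v v"
    using N unfolding eigenvector_def by auto
  define S where "S = (\<Sum>i<n. cnj (v $ i) * (\<Sum>j<n. complex_of_real (N $$ (i,j)) * v $ j))"
  define T where "T = (\<Sum>i<n. cnj (v $ i) * v $ i)"
  have "S = (\<Sum>i<n. cnj (v $ i) * (?Nc *\<^sub>v v) $ i)"
    unfolding S_def using N v by (intro sum.cong refl, subst mult_mat_vec_sum[OF Nc v]) auto
  also have "\<dots> = z * T" unfolding eq T_def using v
    by (auto simp: sum_distrib_left intro!: sum.cong)
  finally have SzT: "S = z * T" .
  have "cnj S = (\<Sum>i<n. \<Sum>j<n. v $ i * complex_of_real (N $$ (i,j)) * cnj (v $ j))"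
    unfolding S_def by (simp add: sum_distrib_left mult_ac)
  also have "\<dots> = (\<Sum>j<n. \<Sum>i<n. v $ i * complex_of_real (N $$ (i,j)) * cnj (v $ j))"
    by (rule sum.swap)
  also have "\<dots> = S" unfolding S_def using sym
    by (auto simp: sum_distrib_left mult_ac intro!: sum.cong)
  finally have Sreal: "cnj S = S" .
  have Treal: "T = complex_of_real (\<Sum>i<n. (cmod (v $ i))^2)"
    unfolding T_def of_real_sum by (rule sum.cong[OF refl]) (metis complex_norm_square mult.commute of_real_power)
  obtain i where i: "i < n" "v $ i \<noteq> 0" using v v0 by (metis eq_vecI carrier_vecD index_zero_vec(1) index_zero_vec(2))
  have "(\<Sum>i<n. (cmod (v $ i))^2) > 0"
    by (rule sum_pos2[of _ i]) (use i in auto)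
  hence T0: "T \<noteq> 0" "cnj T = T"
    by (simp_all only: Treal complex_cnj_complex_of_real) (metis Re_complex_of_real less_irrefl zero_complex.sel(1))
  from Sreal SzT have "cnj z * cnj T = z * T" by simp
  with T0 have "cnj z = z" by simp
  thus ?thesis using Reals_cnj_iff by blast
qed

lemma sym_char_poly_split:
  fixes N :: "real mat"
  assumes N: "N \<in> carrier_mat n n" and sym: "\<And>i j. i < n \<Longrightarrow> j < n \<Longrightarrow> N $$ (i,j) = N $$ (j,i)"
  shows "\<exists>rs. char_poly N = (\<Prod>r\<leftarrow>rs. [:- r, 1:]) \<and> length rs = n"
proof -
  let ?Nc = "map_mat complex_of_real N"
  have Nc: "?Nc \<in> carrier_mat n n" using N by auto
  obtain zs where zs: "char_poly ?Nc = (\<Prod>a\<leftarrow>zs. [:- a, 1:])" "length zs = n"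
    using char_poly_factorized[OF Nc] by blast
  have cp: "char_poly ?Nc = map_poly of_real (char_poly N)"
    using of_real_hom.char_poly_hom[OF N] by simp
  have real: "z \<in> \<real>" if "z \<in> set zs" for z
  proof (rule sym_real_root_real[OF N sym])
    show "poly (char_poly ?Nc) z = 0" unfolding zs(1) using that
      by (auto simp: poly_prod_list prod_list_zero_iff)
  qed
  define rs where "rs = map Re zs"
  interpret mp: map_poly_inj_comm_ring_hom "complex_of_real" ..
  have "map_poly complex_of_real (\<Prod>r\<leftarrow>map Re zs. [:- r, 1:]) = (\<Prod>a\<leftarrow>zs. [:- a, 1:])"
    using real
  proof (induction zs)
    case Nil thus ?case by simp
  next
    case (Cons a zs)
    have IH: "map_poly complex_of_real (\<Prod>r\<leftarrow>map Re zs. [:- r, 1:]) = (\<Prod>a\<leftarrow>zs. [:- a, 1:])"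
      using Cons by simp
    have "complex_of_real (Re a) = a" using Cons.prems[of a] by simp
    hence h: "map_poly complex_of_real [:- Re a, 1:] = [:- a, 1:]" by simp
    show ?case by (simp only: list.map prod_list.Cons mp.hom_mult h IH)
  qed
  hence "map_poly complex_of_real (\<Prod>r\<leftarrow>rs. [:- r, 1:]) = (\<Prod>a\<leftarrow>zs. [:- a, 1:])"
    unfolding rs_def .
  hence "map_poly complex_of_real (\<Prod>r\<leftarrow>rs. [:- r, 1:]) = map_poly of_real (char_poly N)"
    using zs cp by simp
  hence "char_poly N = (\<Prod>r\<leftarrow>rs. [:- r, 1:])"
    by (simp only: mp.eq_iff)
  moreover have "length rs = n" using zs(2) rs_def by simp
  ultimately show ?thesis by blast
qed




lemma sym_swap_sum:
  fixes N :: "real mat"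
  assumes sym: "\<And>i j. i < n \<Longrightarrow> j < n \<Longrightarrow> N $$ (i,j) = N $$ (j,i)"
  shows "(\<Sum>i<n. u i * (\<Sum>j<n. N $$ (i,j) * v j)) = (\<Sum>j<n. v j * (\<Sum>i<n. N $$ (j,i) * u i))"
proof -
  have "(\<Sum>i<n. u i * (\<Sum>j<n. N $$ (i,j) * v j)) = (\<Sum>i<n. \<Sum>j<n. u i * N $$ (i,j) * v j)"
    by (simp add: sum_distrib_left mult_ac)
  also have "\<dots> = (\<Sum>j<n. \<Sum>i<n. u i * N $$ (i,j) * v j)" by (rule sum.swap)
  also have "\<dots> = (\<Sum>j<n. v j * (\<Sum>i<n. N $$ (j,i) * u i))"
    using sym by (simp add: sum_distrib_left mult_ac)
  finally show ?thesis .
qed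

locale spec_setup =
  fixes N :: "real mat" and n :: nat and w :: "nat \<Rightarrow> real" and B :: real
  assumes N: "N \<in> carrier_mat n n"
    and sym: "\<And>i j. i < n \<Longrightarrow> j < n \<Longrightarrow> N $$ (i,j) = N $$ (j,i)"
    and Nw: "\<And>i. i < n \<Longrightarrow> (\<Sum>j<n. N $$ (i,j) * w j) = 0"
    and ray: "\<And>g. (\<Sum>i<n. w i * g i) = 0 \<Longrightarrow>
                 B * (\<Sum>i<n. (g i)^2) \<le> (\<Sum>i<n. g i * (\<Sum>j<n. N $$ (i,j) * g j))"
    and Bpos: "B > 0"
begin

lemma kernel:
  assumes v0: "\<And>i. i < n \<Longrightarrow> (\<Sum>j<n. N $$ (i,j) * v j) = 0"
  shows "\<exists>c. \<forall>i<n. v i = c * w i"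
proof -
  define c where "c = (\<Sum>i<n. w i * v i) / (\<Sum>i<n. (w i)^2)"
  define h where "h i = v i - c * w i" for i
  have wh: "(\<Sum>i<n. w i * h i) = 0"
  proof (cases "(\<Sum>i<n. (w i)^2) = 0")
    case True
    hence "\<forall>i\<in>{..<n}. (w i)^2 = 0" by (subst sum_nonneg_eq_0_iff[symmetric]) auto
    thus ?thesis by (simp)
  next
    case False
    have "(\<Sum>i<n. w i * h i) = (\<Sum>i<n. w i * v i) - c * (\<Sum>i<n. (w i)^2)"
      unfolding h_def by (simp add: algebra_simps sum_subtractf sum_distrib_left power2_eq_square)
    also have "\<dots> = 0" unfolding c_def using False by simp
    finally show ?thesis .
  qed
  have Nh: "(\<Sum>j<n. N $$ (i,j) * h j) = 0" if "i < n" for i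
  proof -
    have "(\<Sum>j<n. N $$ (i,j) * h j) = (\<Sum>j<n. N $$ (i,j) * v j) - c * (\<Sum>j<n. N $$ (i,j) * w j)"
      unfolding h_def by (simp add: algebra_simps sum_subtractf sum_distrib_left)
    thus ?thesis using v0[OF that] Nw[OF that] by simp
  qed
  from ray[OF wh] Nh have "B * (\<Sum>i<n. (h i)^2) \<le> 0" by simp
  hence "(\<Sum>i<n. (h i)^2) \<le> 0" using Bpos by (simp add: mult_le_0_iff)
  hence "(\<Sum>i<n. (h i)^2) = 0" by (meson sum_nonneg zero_le_power2 order_antisym)
  hence "\<forall>i\<in>{..<n}. (h i)^2 = 0" by (subst sum_nonneg_eq_0_iff[symmetric]) auto
  hence "\<forall>i<n. v i = c * w i" unfolding h_def by auto
  thus ?thesis by blast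
qed

lemma eigen_small:
  assumes ev: "\<And>i. i < n \<Longrightarrow> (\<Sum>j<n. N $$ (i,j) * v j) = \<mu> * v i"
    and nz: "i0 < n" "v i0 \<noteq> 0" and small: "\<mu> < B"
  shows "\<mu> = 0"
proof (rule ccontr)
  assume mu: "\<mu> \<noteq> 0"
  have "(\<Sum>i<n. w i * (\<Sum>j<n. N $$ (i,j) * v j)) = (\<Sum>j<n. v j * (\<Sum>i<n. N $$ (j,i) * w i))"
    by (rule sym_swap_sum[OF sym])
  also have "\<dots> = 0" using Nw by simp
  finally have 1: "(\<Sum>i<n. w i * (\<Sum>j<n. N $$ (i,j) * v j)) = 0" .
  have "(\<Sum>i<n. w i * (\<Sum>j<n. N $$ (i,j) * v j)) = (\<Sum>i<n. w i * (\<mu> * v i))"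
    using ev by (intro sum.cong) auto
  hence "\<mu> * (\<Sum>i<n. w i * v i) = 0" using 1 by (simp add: sum_distrib_left mult_ac)
  hence wv: "(\<Sum>i<n. w i * v i) = 0" using mu by simp
  have "B * (\<Sum>i<n. (v i)^2) \<le> (\<Sum>i<n. v i * (\<Sum>j<n. N $$ (i,j) * v j))" by (rule ray[OF wv])
  also have "\<dots> = (\<Sum>i<n. v i * (\<mu> * v i))" using ev by (intro sum.cong) auto
  also have "\<dots> = \<mu> * (\<Sum>i<n. (v i)^2)" by (simp add: sum_distrib_left power2_eq_square mult_ac)
  finally have le: "B * (\<Sum>i<n. (v i)^2) \<le> \<mu> * (\<Sum>i<n. (v i)^2)" .
  have "(\<Sum>i<n. (v i)^2) > 0" by (rule sum_pos2[of _ i0]) (use nz in auto)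
  with le have "B \<le> \<mu>" by simp
  with small show False by simp
qed

end




lemma mult_mat_sum:
  assumes "A \<in> carrier_mat n n" "B \<in> carrier_mat n n" "i < n" "j < n"
  shows "(A * B) $$ (i,j) = (\<Sum>k<n. A $$ (i,k) * B $$ (k,j))"
  using assms by (auto simp: scalar_prod_def atLeast0LessThan intro!: sum.cong)

lemma proots_linear_prod: "proots (\<Prod>r\<leftarrow>rs. [:- r, 1:]) = mset (rs :: real list)"
proof (induction rs)
  case Nil thus ?case by simp
next
  case (Cons a rs)
  have "proots (\<Prod>r\<leftarrow>a#rs. [:- r, 1:]) = proots ([:- a, 1:] * (\<Prod>r\<leftarrow>rs. [:- r, 1:]))" by simp
  also have "\<dots> = proots [:- a, 1:] + proots (\<Prod>r\<leftarrow>rs. [:- r, 1:])"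
    by (rule proots_mult) (auto simp: prod_list_zero_iff)
  finally show ?case using Cons by simp
qed

lemma prod_list_sort_eq: "(\<Prod>r\<leftarrow>sort rs. f r) = (\<Prod>r\<leftarrow>rs. (f r :: 'a :: comm_monoid_mult))"
  by (metis mset_map mset_sort prod_mset_prod_list)

context spec_setup
begin

theorem lambda1_bound:
  assumes n2: "n \<ge> 2"
  shows "B \<le> sorted_list_of_multiset (proots (char_poly N)) ! 1"
proof -
  obtain rs where rs: "char_poly N = (\<Prod>r\<leftarrow>rs. [:- r, 1:])" "length rs = n"
    using sym_char_poly_split[OF N sym] by blast
  define es where "es = sort rs"
  have cp: "char_poly N = (\<Prod>r\<leftarrow>es. [:- r, 1:])" unfolding es_def rs(1) by (rule prod_list_sort_eq[symmetric])
  have sl: "sorted_list_of_multiset (proots (char_poly N)) = es"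
    unfolding rs(1) proots_linear_prod es_def by simp
  have les: "length es = n" using rs(2) es_def by simp
  have srt: "es ! 0 \<le> es ! 1" using n2 les unfolding es_def by (intro sorted_nth_mono) auto
  obtain T P Q where sd: "schur_decomposition N es = (T,P,Q)" by (cases "schur_decomposition N es") auto
  from schur_decomposition[OF N cp sd] have sim: "similar_mat_wit N T P Q"
    and ut: "upper_triangular T" and dg: "diag_mat T = es" by auto
  from similar_mat_witD2[OF N sim] have PQ: "Q * P = 1\<^sub>m n" and NPTQ: "N = P * T * Q"
    and T: "T \<in> carrier_mat n n" and P: "P \<in> carrier_mat n n" and Q: "Q \<in> carrier_mat n n" by auto
  have NP: "N * P = P * T"
  proof -
    have "N * P = P * T * Q * P" using NPTQ by simp
    also have "\<dots> = P * T * (Q * P)" using P T Q by (simp add: assoc_mult_mat[of _ n n _ n _ n])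
    also have "\<dots> = P * T" using PQ P T by simp
    finally show ?thesis .
  qed
  have T00: "T $$ (0,0) = es ! 0" and T11: "T $$ (1,1) = es ! 1"
    using dg n2 T unfolding diag_mat_def by (auto dest: arg_cong[of _ _ "\<lambda>xs. xs ! 0"] arg_cong[of _ _ "\<lambda>xs. xs ! 1"])
  have Tlow: "T $$ (k,j) = 0" if "j < k" "k < n" for k j
    using ut that T unfolding upper_triangular_def by auto
  define p0 where "p0 k = P $$ (k,0)" for k
  define p1 where "p1 k = P $$ (k,1)" for k
  define t where "t = T $$ (0,1)"
  have E0: "(\<Sum>j<n. N $$ (i,j) * p0 j) = es ! 0 * p0 i" if i: "i < n" for i
  proof -
    have "(\<Sum>j<n. N $$ (i,j) * p0 j) = (N * P) $$ (i,0)"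
      unfolding p0_def using mult_mat_sum[OF N P i] n2 by simp
    also have "\<dots> = (P * T) $$ (i,0)" by (simp add: NP)
    also have "\<dots> = (\<Sum>k<n. P $$ (i,k) * T $$ (k,0))" using mult_mat_sum[OF P T i] n2 by simp
    also have "\<dots> = (\<Sum>k\<in>{0}. P $$ (i,k) * T $$ (k,0))"
      by (rule sum.mono_neutral_right) (use n2 Tlow in auto)
    finally show ?thesis unfolding p0_def using T00 by simp
  qed
  have E1: "(\<Sum>j<n. N $$ (i,j) * p1 j) = t * p0 i + es ! 1 * p1 i" if i: "i < n" for i
  proof -
    have "(\<Sum>j<n. N $$ (i,j) * p1 j) = (N * P) $$ (i,1)"
      unfolding p1_def using mult_mat_sum[OF N P i] n2 by simp
    also have "\<dots> = (P * T) $$ (i,1)" by (simp add: NP)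
    also have "\<dots> = (\<Sum>k<n. P $$ (i,k) * T $$ (k,1))" using mult_mat_sum[OF P T i] n2 by simp
    also have "\<dots> = (\<Sum>k\<in>{0,1}. P $$ (i,k) * T $$ (k,1))"
      by (rule sum.mono_neutral_right) (use n2 Tlow in auto)
    finally show ?thesis unfolding p0_def p1_def t_def using T11 by simp
  qed
  have indep: "a = 0 \<and> b = 0" if ab: "\<And>k. k < n \<Longrightarrow> a * p0 k + b * p1 k = 0" for a b
  proof -
    have QP: "(\<Sum>k<n. Q $$ (i,k) * P $$ (k,j)) = (if i = j then 1 else 0)" if "i < n" "j < n" for i j
      using mult_mat_sum[OF Q P that] PQ that by simp
    have lin: "(\<Sum>k<n. Q $$ (i,k) * (a * p0 k + b * p1 k)) = (if i = 0 then a else 0) + (if i = 1 then b else 0)"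
      if "i < n" for i
    proof -
      have "(\<Sum>k<n. Q $$ (i,k) * (a * p0 k + b * p1 k)) =
        a * (\<Sum>k<n. Q $$ (i,k) * P $$ (k,0)) + b * (\<Sum>k<n. Q $$ (i,k) * P $$ (k,1))"
        unfolding p0_def p1_def by (simp add: algebra_simps sum.distrib sum_distrib_left)
      also have "\<dots> = (if i = 0 then a else 0) + (if i = 1 then b else 0)"
        using QP[OF that, of 0] QP[OF that, of 1] n2 by auto
      finally show ?thesis .
    qed
    have "(\<Sum>k<n. Q $$ (i,k) * (a * p0 k + b * p1 k)) = 0" for i using ab by simp
    from lin[of 0] lin[of 1] this[of 0] this[of 1] n2 show ?thesis by auto
  qed
  have p0nz: "\<exists>k<n. p0 k \<noteq> 0"
  proof (rule ccontr)
    assume "\<not> ?thesis"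
    hence "\<And>k. k < n \<Longrightarrow> 1 * p0 k + 0 * p1 k = 0" by auto
    from indep[OF this] show False by simp
  qed
  show ?thesis
  proof (rule ccontr)
    assume "\<not> ?thesis"
    hence r1: "es ! 1 < B" unfolding sl by simp
    obtain k0 where k0: "k0 < n" "p0 k0 \<noteq> 0" using p0nz by blast
    have lt: "es ! 0 < B" using srt r1 by linarith
    have r0: "es ! 0 = 0" using eigen_small[of p0 "es ! 0" k0] E0 k0 lt by simp
    have N0: "(\<Sum>j<n. N $$ (i,j) * p0 j) = 0" if "i < n" for i using E0[OF that] r0 by simp
    obtain c0 where c0: "\<forall>i<n. p0 i = c0 * w i" using kernel[OF N0] by blast
    show False
    proof (cases "es ! 1 = 0")
      case False
      define v where "v k = p1 k + (t / es ! 1) * p0 k" for k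
      have ev: "(\<Sum>j<n. N $$ (i,j) * v j) = es ! 1 * v i" if "i < n" for i
      proof -
        have "(\<Sum>j<n. N $$ (i,j) * v j) = (\<Sum>j<n. N $$ (i,j) * p1 j) + (t / es ! 1) * (\<Sum>j<n. N $$ (i,j) * p0 j)"
          unfolding v_def by (simp add: algebra_simps sum.distrib sum_distrib_left)
        also have "\<dots> = es ! 1 * v i" using E1[OF that] N0[OF that] False unfolding v_def
          by (simp add: field_simps)
        finally show ?thesis .
      qed
      have "\<exists>k<n. v k \<noteq> 0"
      proof (rule ccontr)
        assume "\<not> ?thesis"
        hence "\<And>k. k < n \<Longrightarrow> (t / es ! 1) * p0 k + 1 * p1 k = 0" unfolding v_def by (auto simp: add.commute)
        from indep[OF this] show False by simp
      qed
      then obtain k1 where "k1 < n" "v k1 \<noteq> 0" by blast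
      from eigen_small[OF ev this r1] False show False by simp
    next
      case True
      define u where "u i = (\<Sum>j<n. N $$ (i,j) * p1 j)" for i
      have u: "u i = t * p0 i" if "i < n" for i using E1[OF that] True unfolding u_def by simp
      have "(\<Sum>i<n. u i * u i) = (\<Sum>i<n. u i * (\<Sum>j<n. N $$ (i,j) * p1 j))" unfolding u_def by simp
      also have "\<dots> = (\<Sum>j<n. p1 j * (\<Sum>i<n. N $$ (j,i) * u i))" by (rule sym_swap_sum[OF sym])
      also have "\<dots> = (\<Sum>j<n. p1 j * (t * (\<Sum>i<n. N $$ (j,i) * p0 i)))"
        using u by (intro sum.cong refl) (simp add: sum_distrib_left mult_ac)
      also have "\<dots> = 0" using N0 by simp
      finally have "(\<Sum>i<n. u i * u i) = 0" .
      hence "\<forall>i\<in>{..<n}. u i * u i = 0" by (subst sum_nonneg_eq_0_iff[symmetric]) auto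
      hence "\<And>i. i < n \<Longrightarrow> (\<Sum>j<n. N $$ (i,j) * p1 j) = 0" unfolding u_def by auto
      then obtain c1 where c1: "\<forall>i<n. p1 i = c1 * w i" using kernel by blast
      have c0nz: "c0 \<noteq> 0" using k0 c0 by auto
      have "\<And>k. k < n \<Longrightarrow> c1 * p0 k + (- c0) * p1 k = 0" using c0 c1 by simp
      from indep[OF this] c0nz show False by simp
    qed
  qed
qed

end




locale gsetup =
  fixes n :: nat and E :: "nat \<Rightarrow> nat \<Rightarrow> bool"
  assumes simple: "simple_graph n E" and conn: "connected_graph n E" and n2: "n \<ge> 2"
begin

lemma Ebound: "E i j \<Longrightarrow> i < n \<and> j < n" using simple unfolding simple_graph_def by blast
lemma Esym: "E i j \<longleftrightarrow> E j i" using simple unfolding simple_graph_def by blast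
lemma Eirr: "\<not> E i i" using simple unfolding simple_graph_def by blast

definition walk :: "(nat \<Rightarrow> nat) \<Rightarrow> nat \<Rightarrow> bool" where
  "walk p L \<longleftrightarrow> (\<forall>k<L. E (p k) (p (Suc k)))"

lemma walk_exists: "E\<^sup>*\<^sup>* x y \<Longrightarrow> \<exists>p L. walk p L \<and> p 0 = x \<and> p L = y"
proof (induction rule: rtranclp_induct)
  case base
  show ?case by (rule exI[of _ "\<lambda>_. x"], rule exI[of _ 0]) (simp add: walk_def)
next
  case (step y z)
  then obtain p L where p: "walk p L" "p 0 = x" "p L = y" by blast
  define q where "q k = (if k \<le> L then p k else z)" for k
  have "walk q (Suc L)" unfolding walk_def q_def using p step(2)
    by (auto simp: walk_def less_Suc_eq)
  moreover have "q 0 = x" "q (Suc L) = z" using p unfolding q_def by auto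
  ultimately show ?case by blast
qed

lemma shortest_walk:
  assumes "x < n" "y < n"
  obtains p L where "walk p L" "p 0 = x" "p L = y"
    "\<And>q L'. walk q L' \<Longrightarrow> q 0 = x \<Longrightarrow> q L' = y \<Longrightarrow> L \<le> L'"
proof -
  have "E\<^sup>*\<^sup>* x y" using conn assms unfolding connected_graph_def by blast
  from walk_exists[OF this] obtain p0 L0 where "walk p0 L0 \<and> p0 0 = x \<and> p0 L0 = y" by blast
  then obtain pL where
    pL: "walk (fst pL) (snd pL) \<and> fst pL 0 = x \<and> fst pL (snd pL) = y"
    "\<forall>pL'. walk (fst pL') (snd pL') \<and> fst pL' 0 = x \<and> fst pL' (snd pL') = y \<longrightarrow> snd pL \<le> snd pL'"
    using ex_has_least_nat[where P="\<lambda>pL. walk (fst pL) (snd pL) \<and> fst pL 0 = x \<and> fst pL (snd pL) = y" and m=snd and k="(p0,L0)"]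
    by auto
  show ?thesis
  proof (rule that[of "fst pL" "snd pL"])
    show "walk (fst pL) (snd pL)" "fst pL 0 = x" "fst pL (snd pL) = y" using pL(1) by auto
    fix q L' assume "walk q L'" "q 0 = x" "q L' = y"
    thus "snd pL \<le> L'" using pL(2)[rule_format, of "(q,L')"] by auto
  qed
qed

context
  fixes p L x y
  assumes w: "walk p L" and px: "p 0 = x" and py: "p L = y"
    and short: "\<And>q L'. walk q L' \<Longrightarrow> q 0 = x \<Longrightarrow> q L' = y \<Longrightarrow> L \<le> L'"
begin

lemma sw_inj: "inj_on p {0..L}"
proof (rule inj_onI, rule ccontr)
  fix i j assume ij: "i \<in> {0..L}" "j \<in> {0..L}" "p i = p j" "i \<noteq> j"
  { fix i j assume ij: "i \<le> L" "j \<le> L" "p i = p j" "i < j"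
    define q where "q k = (if k \<le> i then p k else p (k + (j - i)))" for k
    have "walk q (L - (j - i))" unfolding walk_def
    proof (intro allI impI)
      fix k assume k: "k < L - (j - i)"
      show "E (q k) (q (Suc k))"
      proof (cases "k < i")
        case True thus ?thesis using w k ij unfolding q_def walk_def by auto
      next
        case False
        have "E (p (k + (j - i))) (p (Suc (k + (j - i))))" using w k ij unfolding walk_def by auto
        thus ?thesis using False ij unfolding q_def by (cases "k = i") (auto simp: Suc_diff_le)
      qed
    qed
    moreover have "q 0 = x" using px unfolding q_def by simp
    moreover have "q (L - (j - i)) = y"
    proof (cases "L = j")
      case True thus ?thesis using py ij unfolding q_def by auto
    next
      case False thus ?thesis using py ij unfolding q_def by auto
    qed
    ultimately have "L \<le> L - (j - i)" by (rule short)
    hence False using ij by auto }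
  from this[of i j] this[of j i] ij show False by (cases "i < j") auto
qed

lemma sw_shortcut:
  assumes ij: "i \<le> L" "j \<le> L" "i + 2 < j" and z: "E (p i) z" "E z (p j)"
  shows False
proof -
  define \<delta> where "\<delta> = j - i - 2"
  define q where "q k = (if k \<le> i then p k else if k = Suc i then z else p (k + \<delta>))" for k
  have "walk q (L - \<delta>)" unfolding walk_def
  proof (intro allI impI)
    fix k assume k: "k < L - \<delta>"
    show "E (q k) (q (Suc k))"
    proof -
      consider "k < i" | "k = i" | "k = Suc i" | "k > Suc i" by linarith
      thus ?thesis
      proof cases
        case 1 thus ?thesis using w k ij unfolding q_def walk_def by auto
      next
        case 2 thus ?thesis using z unfolding q_def by simp
      next
        case 3
        have "Suc (Suc i) + \<delta> = j" using ij unfolding \<delta>_def by auto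
        hence "q (Suc k) = p j" using 3 unfolding q_def by auto
        moreover have "q k = z" using 3 unfolding q_def by auto
        ultimately show ?thesis using z by simp
      next
        case 4
        have "E (p (k + \<delta>)) (p (Suc (k + \<delta>)))" using w k ij unfolding walk_def \<delta>_def by auto
        thus ?thesis using 4 unfolding q_def by auto
      qed
    qed
  qed
  moreover have "q 0 = x" using px unfolding q_def by simp
  moreover have "q (L - \<delta>) = y" using py ij unfolding q_def \<delta>_def by auto
  ultimately have "L \<le> L - \<delta>" by (rule short)
  thus False using ij unfolding \<delta>_def by auto
qed

lemma sw_three: "card {k. k \<le> L \<and> E z (p k)} \<le> 3"
proof (cases "{k. k \<le> L \<and> E z (p k)} = {}")
  case True thus ?thesis by (simp only: True card.empty)
next
  case False
  define i0 where "i0 = Min {k. k \<le> L \<and> E z (p k)}"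
  have fin: "finite {k. k \<le> L \<and> E z (p k)}" by simp
  have i0: "i0 \<le> L" "E z (p i0)" using Min_in[OF fin False] unfolding i0_def by auto
  have "{k. k \<le> L \<and> E z (p k)} \<subseteq> {i0..i0+2}"
  proof
    fix k assume k: "k \<in> {k. k \<le> L \<and> E z (p k)}"
    have "i0 \<le> k" using Min_le[OF fin k] unfolding i0_def .
    moreover have "\<not> i0 + 2 < k" using sw_shortcut[of i0 k z] i0 k Esym by auto
    ultimately show "k \<in> {i0..i0+2}" by auto
  qed
  hence "card {k. k \<le> L \<and> E z (p k)} \<le> card {i0..i0+2}" by (rule card_mono[rotated]) auto
  thus ?thesis by simp
qed

end

end




lemma cauchy_sum: "(\<Sum>k<L. (a k :: real))^2 \<le> real L * (\<Sum>k<L. (a k)^2)"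
proof -
  have "0 \<le> (\<Sum>i<L. \<Sum>j<L. (a i - a j)^2)" by (intro sum_nonneg) auto
  also have "(\<Sum>i<L. \<Sum>j<L. (a i - a j)^2) = (\<Sum>i<L. \<Sum>j<L. (a i)^2 + (a j)^2 - 2 * (a i * a j))"
    by (intro sum.cong refl) (simp add: power2_eq_square algebra_simps)
  also have "\<dots> = 2 * real L * (\<Sum>k<L. (a k)^2) - 2 * (\<Sum>k<L. a k)^2"
    by (simp add: sum.distrib sum_subtractf sum_distrib_left sum_distrib_right power2_eq_square mult_ac)
  finally show ?thesis by simp
qed

context gsetup
begin

definition En :: "(nat \<Rightarrow> real) \<Rightarrow> real" where
  "En f = (\<Sum>a<n. \<Sum>b<n. if E a b then (f a - f b)^2 else 0) / 2"

lemma En_pairs: "En f = (\<Sum>e\<in>{..<n}\<times>{..<n}. if E (fst e) (snd e) then (f (fst e) - f (snd e))^2 else 0) / 2"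
  unfolding En_def sum.cartesian_product by (simp add: split_def)

lemma walk_in: assumes "walk p L" "k \<le> L" "0 < L" shows "p k < n"
proof (cases "k < L")
  case True thus ?thesis using assms Ebound unfolding walk_def by blast
next
  case False
  hence k: "k = Suc (L - 1)" using assms by auto
  have "L - 1 < L" using assms(3) by simp
  hence "E (p (L - 1)) (p (Suc (L - 1)))" using assms(1) unfolding walk_def by blast
  thus ?thesis using Ebound k by metis
qed

lemma walk_energy:
  assumes w: "walk p L" and inj: "inj_on p {0..L}"
  shows "(\<Sum>k<L. (f (p k) - f (p (Suc k)))^2) \<le> En f"
proof (cases "L = 0")
  case True thus ?thesis unfolding En_def by (auto intro!: sum_nonneg)
next
  case False
  define g where "g e = (if E (fst e) (snd e) then (f (fst e) - f (snd e))^2 else 0)" for e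
  define e1 where "e1 k = (p k, p (Suc k))" for k
  define e2 where "e2 k = (p (Suc k), p k)" for k
  have inj1: "inj_on e1 {..<L}" unfolding e1_def
    by (rule inj_onI) (use inj in \<open>auto dest: inj_onD\<close>)
  have inj2: "inj_on e2 {..<L}" unfolding e2_def
    by (rule inj_onI) (use inj in \<open>auto dest: inj_onD\<close>)
  have disj: "e1 ` {..<L} \<inter> e2 ` {..<L} = {}"
  proof (rule ccontr)
    assume "\<not> ?thesis"
    then obtain k l where kl: "k < L" "l < L" "p k = p (Suc l)" "p (Suc k) = p l"
      unfolding e1_def e2_def by auto
    have "k = Suc l" using inj_onD[OF inj kl(3)] kl by auto
    moreover have "Suc k = l" using inj_onD[OF inj kl(4)] kl by auto
    ultimately show False by simp
  qed
  have g1: "g (e1 k) = (f (p k) - f (p (Suc k)))^2" if "k < L" for k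
    using w that unfolding g_def e1_def walk_def by auto
  have g2: "g (e2 k) = (f (p k) - f (p (Suc k)))^2" if "k < L" for k
    using w that Esym unfolding g_def e2_def walk_def by (auto simp: power2_commute)
  have sub: "e1 ` {..<L} \<union> e2 ` {..<L} \<subseteq> {..<n}\<times>{..<n}"
    using walk_in[OF w] False unfolding e1_def e2_def by auto
  have "2 * (\<Sum>k<L. (f (p k) - f (p (Suc k)))^2) = (\<Sum>k<L. g (e1 k)) + (\<Sum>k<L. g (e2 k))"
    using g1 g2 by simp
  also have "\<dots> = sum g (e1 ` {..<L}) + sum g (e2 ` {..<L})"
    by (simp add: sum.reindex[OF inj1] sum.reindex[OF inj2])
  also have "\<dots> = sum g (e1 ` {..<L} \<union> e2 ` {..<L})"
    by (rule sum.union_disjoint[symmetric]) (use disj in auto)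
  also have "\<dots> \<le> sum g ({..<n}\<times>{..<n})"
    by (rule sum_mono2[OF _ sub]) (auto simp: g_def)
  also have "\<dots> = 2 * En f" unfolding En_pairs g_def by simp
  finally show ?thesis by simp
qed

lemma walk_diff:
  assumes w: "walk p L" and inj: "inj_on p {0..L}"
  shows "(f (p L) - f (p 0))^2 \<le> real L * En f"
proof -
  have "f (p L) - f (p 0) = (\<Sum>k<L. f (p (Suc k)) - f (p k))"
    by (rule sum_lessThan_telescope[symmetric])
  hence "(f (p L) - f (p 0))^2 \<le> real L * (\<Sum>k<L. (f (p (Suc k)) - f (p k))^2)"
    using cauchy_sum[where L=L and a="\<lambda>k. f (p (Suc k)) - f (p k)"] by simp
  also have "\<dots> \<le> real L * En f"
    using walk_energy[OF w inj, of f] by (intro mult_left_mono) (auto simp: power2_commute)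
  finally show ?thesis .
qed

lemma edge_diff: assumes "E a b" shows "(f a - f b)^2 \<le> En f"
proof -
  define p where "p (k::nat) = (if k = 0 then a else b)" for k
  have w: "walk p 1" using assms unfolding walk_def p_def by auto
  have "inj_on p {0..1}" using assms Eirr unfolding p_def inj_on_def by auto
  from walk_diff[OF w this] show ?thesis unfolding p_def by (simp add: power2_commute)
qed

lemma En_nonneg: "En f \<ge> 0" unfolding En_def by (auto intro!: sum_nonneg)

end



context gsetup
begin

lemma deg_card: "degree n E i = real (card {j. j < n \<and> E i j})"
proof -
  have "degree n E i = (\<Sum>j\<in>{j. j < n \<and> E i j}. 1)"
    unfolding degree_def by (rule sum.mono_neutral_cong_right) auto
  thus ?thesis by simp
qed

lemma deg_pos: assumes "i < n" shows "degree n E i \<ge> 1"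
proof -
  define j where "j = (if i = 0 then 1 else (0::nat))"
  have j: "j < n" "j \<noteq> i" using n2 assms unfolding j_def by auto
  have "E\<^sup>*\<^sup>* i j" using conn assms j unfolding connected_graph_def by blast
  then obtain y where "E i y" using j(2) by (cases rule: converse_rtranclpE) auto
  hence "y \<in> {j. j < n \<and> E i j}" using Ebound by auto
  moreover have "finite {j. j < n \<and> E i j}" by simp
  ultimately have "card {j. j < n \<and> E i j} > 0" using card_gt_0_iff by blast
  thus ?thesis unfolding deg_card by simp
qed

lemma deg_le: "degree n E i \<le> n"
proof -
  have "card {j. j < n \<and> E i j} \<le> card {..<n}" by (rule card_mono) auto
  thus ?thesis unfolding deg_card by simp
qed

lemma vol_le: "(\<Sum>i<n. degree n E i) \<le> real n ^ 2"
proof -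
  have "(\<Sum>i<n. degree n E i) \<le> (\<Sum>i<n. real n)" by (rule sum_mono) (rule deg_le)
  thus ?thesis by (simp add: power2_eq_square)
qed

lemma neighbors_on_path:
  assumes w: "walk p L" "p 0 = x" "p L = y"
    and short: "\<And>q L'. walk q L' \<Longrightarrow> q 0 = x \<Longrightarrow> q L' = y \<Longrightarrow> L \<le> L'"
  shows "card {q\<in>p ` {0..L}. E z q} \<le> 3"
proof -
  have "{q\<in>p ` {0..L}. E z q} = p ` {k. k \<le> L \<and> E z (p k)}" by auto
  hence "card {q\<in>p ` {0..L}. E z q} \<le> card {k. k \<le> L \<and> E z (p k)}"
    by (simp add: card_image_le)
  also have "\<dots> \<le> 3" by (rule sw_three[OF w short])
  finally show ?thesis .
qed

lemma path_degree_sum: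
  assumes Q: "finite Q" and cnt: "\<And>z. card {q\<in>Q. E z q} \<le> 3"
  shows "(\<Sum>q\<in>Q. degree n E q) \<le> 3 * real n"
proof -
  have "(\<Sum>q\<in>Q. degree n E q) = (\<Sum>q\<in>Q. \<Sum>j<n. if E q j then 1 else 0)" unfolding degree_def ..
  also have "\<dots> = (\<Sum>j<n. \<Sum>q\<in>Q. if E q j then 1 else 0)" by (rule sum.swap)
  also have "\<dots> = (\<Sum>j<n. real (card {q\<in>Q. E j q}))"
  proof (intro sum.cong refl)
    fix j
    have "(\<Sum>q\<in>Q. if E q j then 1 else (0::real)) = (\<Sum>q\<in>{q\<in>Q. E j q}. 1)"
      using Q Esym by (intro sum.mono_neutral_cong_right) auto
    thus "(\<Sum>q\<in>Q. if E q j then 1 else (0::real)) = real (card {q\<in>Q. E j q})" by simp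
  qed
  also have "\<dots> \<le> (\<Sum>j<n. 3)" by (rule sum_mono) (use cnt in \<open>simp add: of_nat_le_iff\<close>)
  finally show ?thesis by simp
qed

lemma cubic_bound:
  fixes t c :: real assumes "0 \<le> t" "t \<le> c"
  shows "t * (c - t)^2 \<le> 4 * c^3 / 27"
proof -
  have "4 * c^3 / 27 - t * (c - t)^2 = (c - 3*t)^2 * (4*c - 3*t) / 27"
    by (simp add: power2_eq_square power3_eq_cube algebra_simps)
  also have "\<dots> \<ge> 0" using assms by (intro divide_nonneg_pos mult_nonneg_nonneg) auto
  finally show ?thesis by simp
qed

end



definition Bconst :: "nat \<Rightarrow> real" where
  "Bconst n = 1 / (real n ^ 3 / sqrt (sqrt (real n)) + (real n + 1 + 2 * sqrt (3 * real n))^3 / 54)"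

context gsetup
begin

theorem rayleigh_graph:
  fixes f :: "nat \<Rightarrow> real"
  assumes mean: "(\<Sum>i<n. degree n E i * f i) = 0"
  shows "Bconst n * (\<Sum>i<n. degree n E i * (f i)^2) \<le> En f"
proof (rule ccontr)
  define d where "d = degree n E"
  define V where "V = {..<n}"
  define S where "S = (\<Sum>i<n. d i * (f i)^2)"
  define vol where "vol = (\<Sum>i<n. d i)"
  define t where "t = sqrt (sqrt (real n))"
  define \<epsilon> where "\<epsilon> = 1 / t"
  define \<sigma> where "\<sigma> = sqrt (3 * real n)"
  define K where "K = 1 + 2 * \<sigma>"
  define Bn where "Bn = Bconst n"
  assume "\<not> Bconst n * (\<Sum>i<n. degree n E i * (f i)^2) \<le> En f"
  hence contra: "En f < Bn * S" unfolding Bn_def S_def d_def by simp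
  have dpos: "d i \<ge> 1" if "i < n" for i using deg_pos[OF that] unfolding d_def .
  have nreal: "real n \<ge> 2" using n2 by simp
  have t1: "t \<ge> 1" unfolding t_def using nreal by simp
  have t2: "t^2 = sqrt (real n)" unfolding t_def by simp
  have t4: "t^4 = real n"
  proof -
    have "t^4 = (t^2)^2" by (simp flip: power_mult)
    thus ?thesis using t2 by simp
  qed
  have eps_pos: "\<epsilon> > 0" unfolding \<epsilon>_def using t1 by simp
  have sig: "\<sigma>^2 = 3 * real n" "\<sigma> \<ge> 0" unfolding \<sigma>_def by auto
  define D where "D = \<epsilon> * real n ^ 3 + (real n + K)^3 / 54"
  have Dpos: "D > 0" unfolding D_def K_def using eps_pos sig nreal by (intro add_pos_nonneg) auto
  have Bn: "Bn = 1 / D" unfolding Bn_def Bconst_def D_def \<epsilon>_def K_def \<sigma>_def t_def by (simp add: field_simps)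
  have Bpos: "Bn > 0" using Bn Dpos by simp
  have En0: "En f \<ge> 0" by (rule En_nonneg)
  have "Bn * S > 0" using contra En0 by linarith
  hence Spos: "S > 0" using Bpos zero_less_mult_pos by blast
  have BD: "Bn * real n ^ 2 \<le> \<epsilon>^2"
  proof -
    have "D \<ge> \<epsilon> * real n ^ 3" unfolding D_def K_def using sig nreal by auto
    hence "Bn \<le> 1 / (\<epsilon> * real n ^ 3)" unfolding Bn using eps_pos nreal Dpos by (intro divide_left_mono) (auto intro!: mult_pos_pos)
    hence "Bn * real n ^ 2 \<le> 1 / (\<epsilon> * real n ^ 3) * real n ^ 2" using nreal by (intro mult_right_mono) auto
    also have "\<dots> = t / real n" unfolding \<epsilon>_def using nreal t1 by (simp add: field_simps power3_eq_cube power2_eq_square)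
    also have "\<dots> = 1 / t^3" using t4 t1 n2 by (simp add: field_simps) (simp add: power4_eq_xxxx power3_eq_cube)
    also have "\<dots> \<le> 1 / t^2" using t1 by (intro divide_left_mono) (auto simp: power_increasing)
    also have "\<dots> = \<epsilon>^2" unfolding \<epsilon>_def by (simp add: power_divide)
    finally show ?thesis .
  qed
  have "0 \<in> V" unfolding V_def using n2 by simp
  hence Vne: "V \<noteq> {}" "finite V" unfolding V_def by auto
  hence Vne': "{..<n} \<noteq> {}" unfolding V_def by simp
  define M where "M = Max (f ` V)"
  define m where "m = Min (f ` V)"
  have "M \<in> f ` V" unfolding M_def using Vne by (intro Max_in) auto
  then obtain u where u: "u \<in> V" "f u = M" by auto
  have "m \<in> f ` V" unfolding m_def using Vne by (intro Min_in) auto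
  then obtain v where v: "v \<in> V" "f v = m" by auto
  have fM: "f i \<le> M" if "i < n" for i unfolding M_def using Vne that V_def by auto
  have fm: "m \<le> f i" if "i < n" for i unfolding m_def using Vne that V_def by auto
  have M0: "M \<ge> 0"
  proof (rule ccontr)
    assume "\<not> M \<ge> 0"
    have "\<forall>i<n. d i * f i < 0"
    proof (intro allI impI)
      fix i assume i: "i < n"
      have "f i < 0" using fM[OF i] \<open>\<not> M \<ge> 0\<close> by simp
      moreover have "d i > 0" using dpos[OF i] by simp
      ultimately show "d i * f i < 0" by (simp add: mult_pos_neg)
    qed
    hence "(\<Sum>i<n. - (d i * f i)) > 0" using Vne' by (intro sum_pos) auto
    thus False using mean unfolding d_def by (simp add: sum_negf)
  qed
  have m0: "m \<le> 0"
  proof (rule ccontr)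
    assume "\<not> m \<le> 0"
    have "\<forall>i<n. d i * f i > 0"
    proof (intro allI impI)
      fix i assume i: "i < n"
      have "f i > 0" using fm[OF i] \<open>\<not> m \<le> 0\<close> by simp
      moreover have "d i > 0" using dpos[OF i] by simp
      ultimately show "d i * f i > 0" by simp
    qed
    hence "(\<Sum>i<n. d i * f i) > 0" using Vne' by (intro sum_pos) auto
    thus False using mean unfolding d_def by simp
  qed
  define R where "R = M - m"
  have fR: "(f i)^2 \<le> R^2" if "i < n" for i
    using fM[OF that] fm[OF that] M0 m0 unfolding R_def by (intro power2_le_iff_abs_le[THEN iffD2]) auto
  have vol_le: "vol \<le> real n ^ 2" using vol_le unfolding vol_def d_def .
  have vol0: "vol \<ge> 0" unfolding vol_def
  proof (intro sum_nonneg)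
    fix i assume "i \<in> {..<n}" thus "d i \<ge> 0" using dpos[of i] by simp
  qed
  have SR: "S \<le> R^2 * vol"
  proof -
    have "S \<le> (\<Sum>i<n. d i * R^2)" unfolding S_def using fR dpos
      by (intro sum_mono mult_left_mono) (auto intro: order_trans[OF zero_le_one])
    thus ?thesis unfolding vol_def by (simp add: sum_distrib_right mult_ac)
  qed
  have "R^2 * vol > 0" using SR Spos by linarith
  hence "R^2 > 0" using zero_le_power2[of R] by (cases "R^2 = 0") auto
  moreover have "R \<ge> 0" unfolding R_def using M0 m0 by simp
  ultimately have Rpos: "R > 0" by (cases "R = 0") auto
  obtain p L where w: "walk p L" "p 0 = u" "p L = v"
    and short: "\<And>q L'. walk q L' \<Longrightarrow> q 0 = u \<Longrightarrow> q L' = v \<Longrightarrow> L \<le> L'"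
    using shortest_walk[of u v] u v unfolding V_def by auto
  have inj: "inj_on p {0..L}" by (rule sw_inj[OF w short])
  have RL: "R^2 \<le> real L * En f" using walk_diff[OF w(1) inj, of f] w unfolding R_def
    by (simp add: u v power2_commute)
  have L0: "L > 0"
  proof (rule ccontr)
    assume "\<not> L > 0"
    hence "R^2 \<le> 0" using RL by simp
    thus False using Rpos by (simp add: not_le)
  qed
  define Q where "Q = p ` {0..L}"
  have QV: "Q \<subseteq> V" unfolding Q_def V_def using walk_in[OF w(1) _ L0] by auto
  have cardQ: "card Q = L + 1" unfolding Q_def using card_image[OF inj] by simp
  have Ln: "L + 1 \<le> n" using card_mono[OF _ QV] cardQ unfolding V_def by simp
  have Qcnt: "card {q\<in>Q. E z q} \<le> 3" for z unfolding Q_def by (rule neighbors_on_path[OF w short])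
  have Qdeg: "(\<Sum>q\<in>Q. d q) \<le> 3 * real n" unfolding d_def
    by (rule path_degree_sum) (use Qcnt Q_def in auto)
  define \<tau> where "\<tau> = \<epsilon> * R"
  have tau0: "\<tau> \<ge> 0" unfolding \<tau>_def using eps_pos Rpos by simp
  have EnR: "En f < \<epsilon>^2 * R^2"
  proof -
    have "Bn * S \<le> Bn * (R^2 * vol)" using SR Bpos by (intro mult_left_mono) auto
    also have "\<dots> \<le> Bn * (R^2 * real n ^ 2)" using vol_le Bpos by (intro mult_left_mono) auto
    also have "\<dots> = R^2 * (Bn * real n ^ 2)" by simp
    also have "\<dots> \<le> R^2 * \<epsilon>^2" using BD by (intro mult_left_mono) auto
    finally show ?thesis using contra by (simp add: mult.commute)
  qed
  define X where "X = {x\<in>V. f x > \<tau>}"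
  define Y where "Y = {y\<in>V. f y < - \<tau>}"
  have big: "(f x - f y)^2 > 4 * (\<epsilon>^2 * R^2)" if "x \<in> X" "y \<in> Y" for x y
  proof -
    have "f x - f y > 2 * \<tau>" using that unfolding X_def Y_def by auto
    hence "(2 * \<tau>)^2 < (f x - f y)^2" using tau0 by (intro power_strict_mono) auto
    thus ?thesis unfolding \<tau>_def by (simp add: power_mult_distrib)
  qed
  have sep1: "\<not> E x y" if "x \<in> X" "y \<in> Y" for x y
  proof
    assume "E x y"
    hence "(f x - f y)^2 \<le> En f" by (rule edge_diff)
    thus False using big[OF that] EnR En0 by linarith
  qed
  have sep2: "\<not> (E x z \<and> E z y)" if "x \<in> X" "y \<in> Y" for x y z
  proof
    assume e: "E x z \<and> E z y"
    have id: "2 * ((f x - f z)^2 + (f z - f y)^2) - (f x - f y)^2 = ((f x - f z) - (f z - f y))^2"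
      by (simp add: power2_eq_square algebra_simps)
    have "(f x - f y)^2 \<le> 2 * ((f x - f z)^2 + (f z - f y)^2)"
      using id zero_le_power2[of "(f x - f z) - (f z - f y)"] by linarith
    also have "\<dots> \<le> 2 * (En f + En f)" using edge_diff[of x z f] edge_diff[of z y f] e by simp
    finally have "(f x - f y)^2 \<le> 4 * En f" by simp
    thus False using big[OF that] EnR by simp
  qed
  define X' where "X' = X \<union> {z. \<exists>x\<in>X. E x z}"
  define Y' where "Y' = Y \<union> {z. \<exists>y\<in>Y. E y z}"
  have disj: "X' \<inter> Y' = {}"
  proof (rule ccontr)
    assume "X' \<inter> Y' \<noteq> {}"
    then obtain z where z: "z \<in> X'" "z \<in> Y'" by blast
    show False
    proof (cases "z \<in> X")
      case True
      show False
      proof (cases "z \<in> Y")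
        case True thus False using \<open>z \<in> X\<close> tau0 unfolding X_def Y_def by auto
      next
        case False
        then obtain y where "y \<in> Y" "E y z" using z(2) unfolding Y'_def by auto
        thus False using sep1[OF \<open>z \<in> X\<close>, of y] Esym by auto
      qed
    next
      case False
      then obtain x where x: "x \<in> X" "E x z" using z(1) unfolding X'_def by auto
      show False
      proof (cases "z \<in> Y")
        case True thus False using sep1[OF x(1) True] x(2) by auto
      next
        case False
        then obtain y where "y \<in> Y" "E y z" using z(2) unfolding Y'_def by auto
        thus False using sep2[OF x(1) \<open>y \<in> Y\<close>, of z] x(2) Esym by auto
      qed
    qed
  qed
  have X'V: "X' \<subseteq> V" unfolding X'_def X_def V_def using Ebound by auto
  have Y'V: "Y' \<subseteq> V" unfolding Y'_def Y_def V_def using Ebound by auto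
  define AX where "AX = X' - Q"
  define AY where "AY = Y' - Q"
  define a where "a = card AX"
  define b where "b = card AY"
  have finV: "finite V" unfolding V_def by simp
  have ab: "a + b + (L + 1) \<le> n"
  proof -
    have "AX \<inter> AY = {}" unfolding AX_def AY_def using disj by auto
    moreover have "finite AX" "finite AY" unfolding AX_def AY_def using X'V Y'V finV finite_subset by blast+
    ultimately have "card (AX \<union> AY) = a + b" unfolding a_def b_def by (simp add: card_Un_disjoint)
    moreover have "AX \<union> AY \<subseteq> V - Q" unfolding AX_def AY_def using X'V Y'V by auto
    hence "card (AX \<union> AY) \<le> card (V - Q)" using finV by (intro card_mono) auto
    moreover have "card (V - Q) = n - (L + 1)" using card_Diff_subset[OF _ QV] finV cardQ finite_subset[OF QV]
      unfolding V_def by simp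
    ultimately show ?thesis using Ln by linarith
  qed
  have finQ: "finite Q" unfolding Q_def by simp
  have volbound: "(\<Sum>x\<in>Z. d x) \<le> real c * (real c + 2) + 3 * real n"
    if ZV: "Z \<subseteq> V" and Z'V: "Z' \<subseteq> V" and nbZ: "\<And>x j. x \<in> Z \<Longrightarrow> E x j \<Longrightarrow> j \<in> Z'"
       and ZZ': "Z \<subseteq> Z'" and c: "c = card (Z' - Q)" for Z Z' c
  proof -
    have finZ: "finite Z" using ZV finV finite_subset by blast
    have finZ': "finite (Z' - Q)" using Z'V finV finite_subset by blast
    have dx: "d x \<le> real c + 2" if x: "x \<in> Z - Q" for x
    proof -
      have "{j. j < n \<and> E x j} \<subseteq> ((Z' - Q) - {x}) \<union> {q\<in>Q. E x q}"
        using nbZ x Eirr by auto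
      hence "card {j. j < n \<and> E x j} \<le> card (((Z' - Q) - {x}) \<union> {q\<in>Q. E x q})"
        using finZ' finQ by (intro card_mono) auto
      also have "\<dots> \<le> card ((Z' - Q) - {x}) + card {q\<in>Q. E x q}" by (rule card_Un_le)
      also have "\<dots> \<le> (c - 1) + 3" using Qcnt[of x] c x ZZ' finZ' by (intro add_mono) (auto simp: card_Diff_singleton)
      moreover have "c \<ge> 1"
      proof -
        have "x \<in> Z' - Q" using x ZZ' by auto
        hence "card (Z' - Q) > 0" using finZ' card_gt_0_iff by blast
        thus ?thesis unfolding c by simp
      qed
      ultimately have "card {j. j < n \<and> E x j} \<le> c + 2" by linarith
      thus ?thesis unfolding d_def deg_card by simp
    qed
    have "(\<Sum>x\<in>Z. d x) = (\<Sum>x\<in>Z - Q. d x) + (\<Sum>x\<in>Z \<inter> Q. d x)"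
      using sum.Int_Diff[OF finZ, of d Q] by simp
    also have "(\<Sum>x\<in>Z \<inter> Q. d x) \<le> (\<Sum>x\<in>Q. d x)"
      using finQ QV dpos unfolding V_def by (intro sum_mono2) (auto intro: order_trans[OF zero_le_one])
    also have "(\<Sum>x\<in>Z - Q. d x) \<le> (\<Sum>x\<in>Z - Q. real c + 2)" using dx by (intro sum_mono) auto
    also have "\<dots> = real (card (Z - Q)) * (real c + 2)" by simp
    also have "\<dots> \<le> real c * (real c + 2)"
    proof -
      have "card (Z - Q) \<le> c" unfolding c using ZZ' finZ' by (intro card_mono) auto
      thus ?thesis by (intro mult_right_mono) auto
    qed
    finally show ?thesis using Qdeg by linarith
  qed
  define vX where "vX = (\<Sum>x\<in>X. d x)"
  define vY where "vY = (\<Sum>x\<in>Y. d x)"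
  have vX: "vX \<le> real a * (real a + 2) + 3 * real n" unfolding vX_def
    by (rule volbound[of X X' a]) (auto simp: X_def X'_def a_def AX_def V_def dest: Ebound)
  have vY: "vY \<le> real b * (real b + 2) + 3 * real n" unfolding vY_def
    by (rule volbound[of Y Y' b]) (auto simp: Y_def Y'_def b_def AY_def V_def dest: Ebound)
  define P where "P = (\<Sum>i<n. d i * max (f i) 0)"
  define Pm where "Pm = (\<Sum>i<n. d i * max (- f i) 0)"
  have PPm: "P = Pm"
  proof -
    have "P - Pm = (\<Sum>i<n. d i * f i)" unfolding P_def Pm_def
      by (simp add: sum_subtractf[symmetric] right_diff_distrib[symmetric]) (intro sum.cong refl, auto simp: max_def)
    thus ?thesis using mean unfolding d_def by simp
  qed
  have SRP: "S \<le> R * P"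
  proof -
    have "S \<le> (\<Sum>i<n. M * (d i * max (f i) 0) + (- m) * (d i * max (- f i) 0))"
      unfolding S_def
    proof (rule sum_mono)
      fix i assume i: "i \<in> {..<n}"
      have di: "d i \<ge> 0" using dpos[of i] i by simp
      have "(f i)^2 \<le> M * max (f i) 0 + (- m) * max (- f i) 0"
      proof (cases "f i \<ge> 0")
        case True
        hence "(f i)^2 \<le> M * f i" using fM[of i] i by (simp add: power2_eq_square mult_right_mono)
        thus ?thesis using True M0 m0 by (simp add: max_def)
      next
        case False
        hence "(f i)^2 \<le> (- m) * (- f i)" using fm[of i] i by (simp add: power2_eq_square mult_right_mono_neg)
        thus ?thesis using False by (simp add: max_def)
      qed
      from mult_left_mono[OF this di]
      show "d i * (f i)^2 \<le> M * (d i * max (f i) 0) + (- m) * (d i * max (- f i) 0)"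
        by (simp add: algebra_simps)
    qed
    also have "\<dots> = M * P + (- m) * Pm" unfolding P_def Pm_def sum.distrib sum_distrib_left ..
    also have "\<dots> = R * P" unfolding R_def PPm by (simp add: algebra_simps)
    finally show ?thesis .
  qed
  have XX: "{..<n} \<inter> X = X" "{..<n} \<inter> Y = Y" unfolding X_def Y_def V_def by auto
  have indX: "(\<Sum>i<n. if i \<in> X then d i else 0) = vX" unfolding vX_def
    using sum.inter_restrict[of "{..<n}" d X] XX by simp
  have indY: "(\<Sum>i<n. if i \<in> Y then d i else 0) = vY" unfolding vY_def
    using sum.inter_restrict[of "{..<n}" d Y] XX by simp
  have PX: "P \<le> \<tau> * vol + M * vX"
  proof -
    have "P \<le> (\<Sum>i<n. \<tau> * d i + M * (if i \<in> X then d i else 0))" unfolding P_def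
    proof (rule sum_mono)
      fix i assume i: "i \<in> {..<n}"
      have di: "d i \<ge> 0" using dpos[of i] i by simp
      show "d i * max (f i) 0 \<le> \<tau> * d i + M * (if i \<in> X then d i else 0)"
      proof (cases "i \<in> X")
        case True
        have "max (f i) 0 \<le> \<tau> + M" using fM[of i] i M0 tau0 by auto
        from mult_left_mono[OF this di] show ?thesis using True by (simp add: algebra_simps)
      next
        case False
        hence "max (f i) 0 \<le> \<tau>" using i tau0 unfolding X_def V_def by auto
        from mult_left_mono[OF this di] show ?thesis using False by (simp add: algebra_simps)
      qed
    qed
    also have "\<dots> = \<tau> * vol + M * vX" unfolding vol_def indX[symmetric]
      by (simp add: sum.distrib sum_distrib_left)
    finally show ?thesis .
  qed
  have PY: "P \<le> \<tau> * vol + (- m) * vY"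
  proof -
    have "Pm \<le> (\<Sum>i<n. \<tau> * d i + (- m) * (if i \<in> Y then d i else 0))" unfolding Pm_def
    proof (rule sum_mono)
      fix i assume i: "i \<in> {..<n}"
      have di: "d i \<ge> 0" using dpos[of i] i by simp
      show "d i * max (- f i) 0 \<le> \<tau> * d i + (- m) * (if i \<in> Y then d i else 0)"
      proof (cases "i \<in> Y")
        case True
        have "max (- f i) 0 \<le> \<tau> + (- m)" using fm[of i] i m0 tau0 by auto
        from mult_left_mono[OF this di] show ?thesis using True by (simp add: algebra_simps)
      next
        case False
        hence "max (- f i) 0 \<le> \<tau>" using i tau0 unfolding Y_def V_def by auto
        from mult_left_mono[OF this di] show ?thesis using False by (simp add: algebra_simps)
      qed
    qed
    also have "\<dots> = \<tau> * vol + (- m) * vY" unfolding vol_def indY[symmetric] sum.distrib sum_distrib_left ..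
    finally show ?thesis using PPm by simp
  qed
  define pA where "pA = real a + 1 + \<sigma>"
  define pB where "pB = real b + 1 + \<sigma>"
  have pA0: "pA \<ge> 0" "pB \<ge> 0" unfolding pA_def pB_def using sig by auto
  have vXp: "vX \<le> pA^2"
  proof -
    have "pA^2 = real a * (real a + 2) + 1 + 2 * (real a + 1) * \<sigma> + \<sigma>^2" unfolding pA_def
      by (simp add: power2_eq_square algebra_simps)
    moreover have "(real a + 1) * \<sigma> \<ge> 0" using sig by simp
    ultimately show ?thesis using vX sig by linarith
  qed
  have vYp: "vY \<le> pB^2"
  proof -
    have "pB^2 = real b * (real b + 2) + 1 + 2 * (real b + 1) * \<sigma> + \<sigma>^2" unfolding pB_def
      by (simp add: power2_eq_square algebra_simps)
    moreover have "(real b + 1) * \<sigma> \<ge> 0" using sig by simp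
    ultimately show ?thesis using vY sig by linarith
  qed
  have vX0: "vX \<ge> 0" "vY \<ge> 0" unfolding vX_def vY_def X_def Y_def V_def
    using dpos by (auto intro!: sum_nonneg intro: order_trans[OF zero_le_one])
  have Pbound: "P - \<tau> * vol \<le> R / 2 * (pA * pB)"
  proof (cases "P - \<tau> * vol \<le> 0")
    case True
    have "R / 2 * (pA * pB) \<ge> 0" using Rpos pA0 by simp
    thus ?thesis using True by linarith
  next
    case False
    have h1: "0 \<le> P - \<tau> * vol" "P - \<tau> * vol \<le> M * vX" using False PX by auto
    have h2: "P - \<tau> * vol \<le> (- m) * vY" using PY by simp
    have "(P - \<tau> * vol)^2 \<le> (M * vX) * ((- m) * vY)"
      unfolding power2_eq_square by (rule mult_mono[OF h1(2) h2]) (use M0 vX0 h1 in auto)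
    also have "\<dots> = (M * (- m)) * (vX * vY)" by (simp add: algebra_simps)
    also have "\<dots> \<le> (R^2 / 4) * (pA^2 * pB^2)"
    proof (rule mult_mono)
      have "R^2 / 4 - M * (- m) = ((M + m) / 2)^2" unfolding R_def by (simp add: power2_eq_square field_simps)
      thus "M * (- m) \<le> R^2 / 4" using zero_le_power2[of "(M + m) / 2"] by linarith
      show "vX * vY \<le> pA^2 * pB^2" using vXp vYp vX0 by (intro mult_mono) auto
    qed (use vX0 in auto)
    also have "\<dots> = (R / 2 * (pA * pB))^2" unfolding power2_eq_square by (simp add: algebra_simps)
    finally have sq: "(P - \<tau> * vol)^2 \<le> (R / 2 * (pA * pB))^2" .
    have nn: "0 \<le> R / 2 * (pA * pB)" using Rpos pA0 by simp
    show ?thesis using power2_le_imp_le[OF sq nn] .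
  qed
  have pAB: "pA * pB \<le> (real n + K - real L)^2 / 4"
  proof -
    have "pA + pB \<le> real n + K - real L" unfolding pA_def pB_def K_def using ab by simp
    moreover have "pA * pB \<le> ((pA + pB) / 2)^2"
    proof -
      have "((pA + pB) / 2)^2 - pA * pB = ((pA - pB) / 2)^2" by (simp add: power2_eq_square field_simps)
      thus ?thesis using zero_le_power2[of "(pA - pB) / 2"] by linarith
    qed
    moreover have "((pA + pB) / 2)^2 \<le> ((real n + K - real L) / 2)^2"
      using calculation(1) pA0 by (intro power_mono) auto
    ultimately show ?thesis by (simp add: power_divide)
  qed
  define W where "W = \<epsilon> * real n ^ 2 + (real n + K - real L)^2 / 8"
  have W0: "W \<ge> 0" unfolding W_def using eps_pos by simp
  have "S \<le> R * P" by (rule SRP)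
  also have "\<dots> \<le> R * (\<tau> * vol + R / 2 * (pA * pB))" using Pbound Rpos by (intro mult_left_mono) auto
  also have "\<dots> = R^2 * (\<epsilon> * vol + pA * pB / 2)" unfolding \<tau>_def by (simp add: power2_eq_square algebra_simps)
  also have "\<dots> \<le> R^2 * W" unfolding W_def
    using vol_le pAB eps_pos by (intro mult_left_mono add_mono) auto
  also have "\<dots> \<le> (real L * En f) * W" using RL W0 by (intro mult_right_mono) auto
  also have "\<dots> = En f * (\<epsilon> * real L * real n ^ 2 + real L * (real n + K - real L)^2 / 8)"
    unfolding W_def by (simp add: algebra_simps)
  also have "\<dots> \<le> En f * D"
  proof (rule mult_left_mono[OF _ En0])
    have "real L \<le> real n" using Ln by simp
    hence "\<epsilon> * real L * real n ^ 2 \<le> \<epsilon> * real n ^ 3" using eps_pos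
      by (simp add: power3_eq_cube power2_eq_square mult_right_mono)
    moreover have "real L * (real n + K - real L)^2 \<le> 4 * (real n + K)^3 / 27"
      using cubic_bound[of "real L" "real n + K"] Ln sig unfolding K_def by simp
    ultimately show "\<epsilon> * real L * real n ^ 2 + real L * (real n + K - real L)^2 / 8 \<le> D"
      unfolding D_def by linarith
  qed
  finally have "S \<le> En f * D" .
  hence "Bn * S \<le> En f" unfolding Bn using Dpos by (simp add: field_simps)
  thus False using contra by simp
qed

end



context gsetup
begin

abbreviation sd where "sd i \<equiv> sqrt (degree n E i)"

lemma sd_pos: assumes "i < n" shows "sd i > 0"
proof -
  have "degree n E i \<ge> 1" by (rule deg_pos[OF assms])
  thus ?thesis by simp
qed

lemma sum_delta_mult: "i < n \<Longrightarrow> (\<Sum>l<n. (if i = l then c else 0) * h l) = c * (h i :: real)"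
proof -
  assume i: "i < n"
  have "(\<Sum>l<n. (if i = l then c else 0) * h l) = (\<Sum>l<n. if i = l then c * h l else 0)"
    by (intro sum.cong refl) auto
  also have "\<dots> = c * h i" using i by simp
  finally show ?thesis .
qed

lemma NL_carrier: "norm_laplacian n E \<in> carrier_mat n n"
  unfolding norm_laplacian_def deg_inv_sqrt_def adj_matrix_def by auto

lemma NL_entry:
  assumes i: "i < n" and j: "j < n"
  shows "norm_laplacian n E $$ (i,j) = (if i = j then 1 else 0) - (if E i j then 1 else 0) / (sd i * sd j)"
proof -
  define D where "D = deg_inv_sqrt n E"
  define A where "A = adj_matrix n E"
  have D: "D \<in> carrier_mat n n" and A: "A \<in> carrier_mat n n"
    unfolding D_def A_def deg_inv_sqrt_def adj_matrix_def by auto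
  have DA: "(D * A) $$ (i,k) = (if E i k then 1 else 0) / sd i" if k: "k < n" for k
  proof -
    have "(D * A) $$ (i,k) = (\<Sum>l<n. D $$ (i,l) * A $$ (l,k))" by (rule mult_mat_sum[OF D A i k])
    also have "\<dots> = (\<Sum>l<n. (if i = l then 1 / sd i else 0) * (if E l k then 1 else 0))"
      using i k unfolding D_def A_def deg_inv_sqrt_def adj_matrix_def by (intro sum.cong refl) auto
    also have "\<dots> = 1 / sd i * (if E i k then 1 else 0)"
      by (rule sum_delta_mult[OF i, of "1 / sd i" "\<lambda>l. if E l k then 1 else 0"])
    finally show ?thesis by simp
  qed
  have DA_c: "D * A \<in> carrier_mat n n" using D A by simp
  have Dent: "D $$ (k,j) = (if j = k then 1 / sd j else 0)" if "k < n" for k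
    using that j unfolding D_def deg_inv_sqrt_def by auto
  have "(D * A * D) $$ (i,j) = (\<Sum>k<n. (D * A) $$ (i,k) * D $$ (k,j))" by (rule mult_mat_sum[OF DA_c D i j])
  also have "\<dots> = (\<Sum>k<n. (if j = k then 1 / sd j else 0) * ((if E i k then 1 else 0) / sd i))"
    by (intro sum.cong refl) (simp add: DA Dent)
  also have "\<dots> = 1 / sd j * ((if E i j then 1 else 0) / sd i)"
    by (rule sum_delta_mult[OF j, of "1 / sd j" "\<lambda>k. (if E i k then 1 else 0) / sd i"])
  finally have "(D * A * D) $$ (i,j) = (if E i j then 1 else 0) / (sd i * sd j)" by (simp add: mult.commute)
  moreover have "norm_laplacian n E $$ (i,j) = 1\<^sub>m n $$ (i,j) - (D * A * D) $$ (i,j)"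
    unfolding norm_laplacian_def D_def[symmetric] A_def[symmetric] using i j D A by simp
  ultimately show ?thesis using i j by simp
qed

end



context gsetup
begin

lemma aux1: "(s::real) > 0 \<Longrightarrow> s * s * (g / s) = s * g" by simp
lemma aux2: "(s::real) > 0 \<Longrightarrow> s * s * (g / s)^2 = g^2" by (simp add: power2_eq_square)

lemma deg_sum: "(\<Sum>j<n. if E i j then 1 else 0) = degree n E i" unfolding degree_def ..

lemma En_expand: "En f = (\<Sum>i<n. degree n E i * (f i)^2) - (\<Sum>i<n. \<Sum>j<n. (if E i j then 1 else 0) * (f i * f j))"
proof -
  define c where "c a b = (if E a b then 1 else (0::real))" for a b
  have "(\<Sum>a<n. \<Sum>b<n. if E a b then (f a - f b)^2 else 0)
      = (\<Sum>a<n. \<Sum>b<n. c a b * (f a)^2 + c a b * (f b)^2 - 2 * (c a b * (f a * f b)))"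
    unfolding c_def by (intro sum.cong refl) (auto simp: power2_eq_square algebra_simps)
  also have "\<dots> = (\<Sum>a<n. \<Sum>b<n. c a b * (f a)^2) + (\<Sum>a<n. \<Sum>b<n. c a b * (f b)^2)
        - 2 * (\<Sum>a<n. \<Sum>b<n. c a b * (f a * f b))"
    by (simp only: sum.distrib sum_subtractf sum_distrib_left)
  finally have "(\<Sum>a<n. \<Sum>b<n. if E a b then (f a - f b)^2 else 0)
      = (\<Sum>a<n. \<Sum>b<n. (if E a b then 1 else 0) * (f a)^2) + (\<Sum>a<n. \<Sum>b<n. (if E a b then 1 else 0) * (f b)^2)
        - 2 * (\<Sum>a<n. \<Sum>b<n. (if E a b then 1 else 0) * (f a * f b))" unfolding c_def .
  also have "(\<Sum>a<n. \<Sum>b<n. (if E a b then 1 else 0) * (f a)^2) = (\<Sum>a<n. degree n E a * (f a)^2)"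
    unfolding degree_def by (simp add: sum_distrib_right)
  also have "(\<Sum>a<n. \<Sum>b<n. (if E a b then 1 else 0) * (f b)^2) = (\<Sum>b<n. \<Sum>a<n. (if E a b then 1 else 0) * (f b)^2)"
    by (rule sum.swap)
  also have "\<dots> = (\<Sum>b<n. degree n E b * (f b)^2)"
    unfolding degree_def using Esym by (simp add: sum_distrib_right)
  finally show ?thesis unfolding En_def by simp
qed

theorem lambda1_ge: "Bconst n \<le> lambda1 n E"
proof -
  let ?N = "norm_laplacian n E"
  have Bpos: "Bconst n > 0" unfolding Bconst_def using n2
    by (intro divide_pos_pos add_pos_nonneg) auto
  interpret sp: spec_setup ?N n sd "Bconst n"
  proof
    show "?N \<in> carrier_mat n n" by (rule NL_carrier)
    show "?N $$ (i,j) = ?N $$ (j,i)" if "i < n" "j < n" for i j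
      using that by (simp add: NL_entry Esym[of i j] mult.commute)
    show "Bconst n > 0" by (rule Bpos)
    show "(\<Sum>j<n. ?N $$ (i,j) * sd j) = 0" if i: "i < n" for i
    proof -
      have "(\<Sum>j<n. ?N $$ (i,j) * sd j) = (\<Sum>j<n. (if i = j then sd j else 0) - (if E i j then 1 else 0) / sd i)"
      proof (intro sum.cong refl)
        fix j assume "j \<in> {..<n}"
        hence j: "j < n" by simp
        have "sd j > 0" "sd i > 0" using sd_pos[OF j] sd_pos[OF i] by auto
        thus "?N $$ (i,j) * sd j = (if i = j then sd j else 0) - (if E i j then 1 else 0) / sd i"
          using i j by (auto simp: NL_entry field_simps)
      qed
      also have "\<dots> = sd i - degree n E i / sd i"
        using i by (simp add: sum_subtractf sum_divide_distrib[symmetric] deg_sum)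
      also have "\<dots> = 0" using sd_pos[OF i] deg_pos[OF i]
        by (simp add: field_simps)
      finally show ?thesis .
    qed
    fix g :: "nat \<Rightarrow> real"
    assume mean: "(\<Sum>i<n. sd i * g i) = 0"
    define f where "f i = g i / sd i" for i
    have dsq: "degree n E i = sd i * sd i" if "i < n" for i
    proof -
      have "sd i * sd i = \<bar>degree n E i\<bar>" by (rule real_sqrt_mult_self)
      thus ?thesis using deg_pos[OF that] by simp
    qed
    have m: "(\<Sum>i<n. degree n E i * f i) = 0"
    proof -
      have "(\<Sum>i<n. degree n E i * f i) = (\<Sum>i<n. sd i * g i)"
      proof (intro sum.cong refl)
        fix i assume "i \<in> {..<n}"
        hence i: "i < n" by simp
        have "sd i > 0" by (rule sd_pos[OF i])
        thus "degree n E i * f i = sd i * g i" by (metis aux1 dsq[OF i] f_def)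
      qed
      thus ?thesis using mean by simp
    qed
    have S: "(\<Sum>i<n. degree n E i * (f i)^2) = (\<Sum>i<n. (g i)^2)"
    proof (intro sum.cong refl)
      fix i assume "i \<in> {..<n}"
      hence i: "i < n" by simp
      have "sd i > 0" by (rule sd_pos[OF i])
      thus "degree n E i * (f i)^2 = (g i)^2" by (metis aux2 dsq[OF i] f_def)
    qed
    have trm: "g i * (?N $$ (i,j) * g j) = (if i = j then g i * g j else 0) - (if E i j then 1 else 0) * (f i * f j)"
      if "i < n" "j < n" for i j
      using that by (cases "E i j") (simp_all add: NL_entry f_def algebra_simps)
    have Q: "(\<Sum>i<n. g i * (\<Sum>j<n. ?N $$ (i,j) * g j)) = En f"
    proof -
      have "(\<Sum>i<n. g i * (\<Sum>j<n. ?N $$ (i,j) * g j)) = (\<Sum>i<n. \<Sum>j<n. g i * (?N $$ (i,j) * g j))"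
        by (simp only: sum_distrib_left)
      also have "\<dots> = (\<Sum>i<n. \<Sum>j<n. (if i = j then g i * g j else 0) - (if E i j then 1 else 0) * (f i * f j))"
        using trm by (intro sum.cong refl) auto
      also have "\<dots> = (\<Sum>i<n. (g i)^2) - (\<Sum>i<n. \<Sum>j<n. (if E i j then 1 else 0) * (f i * f j))"
        by (simp add: sum_subtractf power2_eq_square)
      also have "\<dots> = En f" unfolding En_expand S ..
      finally show ?thesis .
    qed
    show "Bconst n * (\<Sum>i<n. (g i)^2) \<le> (\<Sum>i<n. g i * (\<Sum>j<n. ?N $$ (i,j) * g j))"
      using rayleigh_graph[OF m] unfolding S Q .
  qed
  show ?thesis unfolding lambda1_def by (rule sp.lambda1_bound[OF n2])
qed

end



lemma alpha_ge: assumes n2: "n \<ge> 2" shows "Bconst n \<le> alpha n"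
proof -
  define S where "S = {lambda1 n E | E. simple_graph n E \<and> connected_graph n E}"
  define E0 where "E0 i j = (i < n \<and> j < n \<and> i \<noteq> j)" for i j
  have "simple_graph n E0" unfolding simple_graph_def E0_def by auto
  moreover have "connected_graph n E0" unfolding connected_graph_def
  proof (intro allI impI)
    fix i j assume "i < n" "j < n"
    thus "E0\<^sup>*\<^sup>* i j" by (cases "i = j") (auto simp: E0_def intro: r_into_rtranclp)
  qed
  ultimately have "S \<noteq> {}" unfolding S_def by blast
  moreover have "\<forall>x\<in>S. Bconst n \<le> x"
  proof
    fix x assume "x \<in> S"
    then obtain E where E: "x = lambda1 n E" "simple_graph n E" "connected_graph n E" unfolding S_def by blast
    interpret gsetup n E using E n2 by unfold_locales auto
    show "Bconst n \<le> x" using lambda1_ge E by simp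
  qed
  ultimately have "Bconst n \<le> Inf S" by (intro cInf_greatest) auto
  thus ?thesis unfolding alpha_def S_def .
qed

lemma Blim: "(\<lambda>n. Bconst n * real n ^ 3 / 54 - 1) \<longlonglongrightarrow> 0"
proof -
  have "((\<lambda>x::real. 1 / (x ^ 3 / sqrt (sqrt x) + (x + 1 + 2 * sqrt (3 * x))^3 / 54) * x ^ 3 / 54 - 1) \<longlongrightarrow> 0) at_top"
    by real_asymp
  from filterlim_compose[OF this filterlim_real_sequentially]
  show ?thesis unfolding Bconst_def by (simp add: o_def)
qed

theorem claim3p3:
  shows "\<exists>g :: nat \<Rightarrow> real. (g \<longlonglongrightarrow> 0) \<and>
           (\<forall>\<^sub>F n in sequentially. alpha n \<ge> (1 + g n) * 54 / real n ^ 3)"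
proof (intro exI conjI)
  show "(\<lambda>n. Bconst n * real n ^ 3 / 54 - 1) \<longlonglongrightarrow> 0" by (rule Blim)
  show "\<forall>\<^sub>F n in sequentially. alpha n \<ge> (1 + (Bconst n * real n ^ 3 / 54 - 1)) * 54 / real n ^ 3"
    using eventually_ge_at_top[of 2]
  proof eventually_elim
    case (elim n)
    have "(1 + (Bconst n * real n ^ 3 / 54 - 1)) * 54 / real n ^ 3 = Bconst n" using elim by simp
    thus ?case using alpha_ge[OF elim] by simp
  qed
qed


end
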